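(* Let $M=r^2\phi^{-2}\partial_r$ on the expanding region $\mathcal{R}^+$ of Schwarzschild–de Sitter. Then for every (sufficiently regular) function $\psi$, $K^M[\psi]\le0$ everywhere on $\mathcal{R}^+$.
   Context: Fix $\Lambda>0$, $0<3m<1/\sqrt\Lambda$; $D(r)=\frac{\Lambda}{3}r^2-1+\frac{2m}{r}$, $r_{\mathcal{C}}$ its largest positive root; $\mathcal{R}^+=(r_{\mathcal{C}},\infty)_r\times\mathbb{R}_t\times\mathbb{S}^2$ with $g=-D^{-1}dr^2+Ddt^2+r^2\gamma_{\mathbb{S}^2}$; $\phi=D^{-1/2}$. $T_{\mu\nu}[\psi]=\partial_\mu\psi\partial_\nu\psi-\frac12g_{\mu\nu}g^{\alpha\beta}\partial_\alpha\psi\partial_\beta\psi$; for a vector field $X$, ${}^{(X)}\pi^{\mu\nu}=\frac12(\nabla^\mu X^\nu+\nabla^\nu X^\mu)$ and $K^X[\psi]={}^{(X)}\pi^{\mu\nu}T_{\mu\nu}[\psi]$. *)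

theory Defs
  imports "HOL-Analysis.Analysis"
begin

text \<open>Coordinates: a point is x :: nat => real with x 0 = r, x 1 = t,
  x 2 = theta, x 3 = varphi (polar coordinates on the sphere); indices range over {0..<4}.\<close>

definition sdsD :: "real \<Rightarrow> real \<Rightarrow> real \<Rightarrow> real" where
  "sdsD \<Lambda> m r = \<Lambda> / 3 * r^2 - 1 + 2 * m / r"

definition rC :: "real \<Rightarrow> real \<Rightarrow> real" where
  "rC \<Lambda> m = (GREATEST r. r > 0 \<and> sdsD \<Lambda> m r = 0)"

definition sdsphi :: "real \<Rightarrow> real \<Rightarrow> real \<Rightarrow> real" where
  "sdsphi \<Lambda> m r = 1 / sqrt (sdsD \<Lambda> m r)"

definition sds_g :: "real \<Rightarrow> real \<Rightarrow> (nat \<Rightarrow> real) \<Rightarrow> nat \<Rightarrow> nat \<Rightarrow> real" where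
  "sds_g \<Lambda> m x \<mu> \<nu> =
     (if \<mu> \<noteq> \<nu> then 0
      else if \<mu> = 0 then - 1 / sdsD \<Lambda> m (x 0)
      else if \<mu> = 1 then sdsD \<Lambda> m (x 0)
      else if \<mu> = 2 then (x 0)^2
      else if \<mu> = 3 then (x 0)^2 * (sin (x 2))^2
      else 0)"

definition sds_ginv :: "real \<Rightarrow> real \<Rightarrow> (nat \<Rightarrow> real) \<Rightarrow> nat \<Rightarrow> nat \<Rightarrow> real" where
  "sds_ginv \<Lambda> m x \<mu> \<nu> =
     (if \<mu> \<noteq> \<nu> then 0
      else if \<mu> = 0 then - sdsD \<Lambda> m (x 0)
      else if \<mu> = 1 then 1 / sdsD \<Lambda> m (x 0)
      else if \<mu> = 2 then 1 / (x 0)^2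
      else if \<mu> = 3 then 1 / ((x 0)^2 * (sin (x 2))^2)
      else 0)"

definition pd :: "((nat \<Rightarrow> real) \<Rightarrow> real) \<Rightarrow> (nat \<Rightarrow> real) \<Rightarrow> nat \<Rightarrow> real" where
  "pd f x \<mu> = deriv (\<lambda>s. f (x(\<mu> := s))) (x \<mu>)"

definition christoffel ::
  "((nat \<Rightarrow> real) \<Rightarrow> nat \<Rightarrow> nat \<Rightarrow> real) \<Rightarrow> ((nat \<Rightarrow> real) \<Rightarrow> nat \<Rightarrow> nat \<Rightarrow> real)
   \<Rightarrow> (nat \<Rightarrow> real) \<Rightarrow> nat \<Rightarrow> nat \<Rightarrow> nat \<Rightarrow> real" where
  "christoffel g ginv x la \<mu> \<nu> =
     (1/2) * (\<Sum>\<sigma><4. ginv x la \<sigma> *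
        (pd (\<lambda>y. g y \<sigma> \<nu>) x \<mu> + pd (\<lambda>y. g y \<sigma> \<mu>) x \<nu> - pd (\<lambda>y. g y \<mu> \<nu>) x \<sigma>))"

definition covd ::
  "((nat \<Rightarrow> real) \<Rightarrow> nat \<Rightarrow> nat \<Rightarrow> real) \<Rightarrow> ((nat \<Rightarrow> real) \<Rightarrow> nat \<Rightarrow> nat \<Rightarrow> real)
   \<Rightarrow> ((nat \<Rightarrow> real) \<Rightarrow> nat \<Rightarrow> real) \<Rightarrow> (nat \<Rightarrow> real) \<Rightarrow> nat \<Rightarrow> nat \<Rightarrow> real" where
  "covd g ginv X x \<mu> \<nu> =
     pd (\<lambda>y. X y \<nu>) x \<mu> + (\<Sum>la<4. christoffel g ginv x \<nu> \<mu> la * X x la)"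

definition deformation ::
  "((nat \<Rightarrow> real) \<Rightarrow> nat \<Rightarrow> nat \<Rightarrow> real) \<Rightarrow> ((nat \<Rightarrow> real) \<Rightarrow> nat \<Rightarrow> nat \<Rightarrow> real)
   \<Rightarrow> ((nat \<Rightarrow> real) \<Rightarrow> nat \<Rightarrow> real) \<Rightarrow> (nat \<Rightarrow> real) \<Rightarrow> nat \<Rightarrow> nat \<Rightarrow> real" where
  "deformation g ginv X x \<mu> \<nu> =
     (1/2) * ((\<Sum>\<alpha><4. ginv x \<mu> \<alpha> * covd g ginv X x \<alpha> \<nu>)
            + (\<Sum>\<alpha><4. ginv x \<nu> \<alpha> * covd g ginv X x \<alpha> \<mu>))"

definition stress ::
  "((nat \<Rightarrow> real) \<Rightarrow> nat \<Rightarrow> nat \<Rightarrow> real) \<Rightarrow> ((nat \<Rightarrow> real) \<Rightarrow> nat \<Rightarrow> nat \<Rightarrow> real)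
   \<Rightarrow> ((nat \<Rightarrow> real) \<Rightarrow> real) \<Rightarrow> (nat \<Rightarrow> real) \<Rightarrow> nat \<Rightarrow> nat \<Rightarrow> real" where
  "stress g ginv \<psi> x \<mu> \<nu> =
     pd \<psi> x \<mu> * pd \<psi> x \<nu>
     - (1/2) * g x \<mu> \<nu> * (\<Sum>\<alpha><4. \<Sum>\<beta><4. ginv x \<alpha> \<beta> * pd \<psi> x \<alpha> * pd \<psi> x \<beta>)"

definition Kcurrent ::
  "((nat \<Rightarrow> real) \<Rightarrow> nat \<Rightarrow> nat \<Rightarrow> real) \<Rightarrow> ((nat \<Rightarrow> real) \<Rightarrow> nat \<Rightarrow> nat \<Rightarrow> real)
   \<Rightarrow> ((nat \<Rightarrow> real) \<Rightarrow> nat \<Rightarrow> real) \<Rightarrow> ((nat \<Rightarrow> real) \<Rightarrow> real) \<Rightarrow> (nat \<Rightarrow> real) \<Rightarrow> real" where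
  "Kcurrent g ginv X \<psi> x =
     (\<Sum>\<mu><4. \<Sum>\<nu><4. deformation g ginv X x \<mu> \<nu> * stress g ginv \<psi> x \<mu> \<nu>)"

definition sdsM :: "real \<Rightarrow> real \<Rightarrow> (nat \<Rightarrow> real) \<Rightarrow> nat \<Rightarrow> real" where
  "sdsM \<Lambda> m x \<mu> = (if \<mu> = 0 then (x 0)^2 / (sdsphi \<Lambda> m (x 0))^2 else 0)"

end

theory Submission
  imports Defs "HOL-Computational_Algebra.Polynomial"
begin


lemma h_root: "r \<noteq> 0 \<Longrightarrow> sdsD L m r = 0 \<longleftrightarrow> L/3*r^3 - r + 2*m = 0"
  unfolding sdsD_def by (auto simp: field_simps power3_eq_cube power2_eq_square)

lemma h_pos: "r > 0 \<Longrightarrow> sdsD L m r > 0 \<longleftrightarrow> L/3*r^3 - r + 2*m > 0"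
proof -
  assume r: "r > 0"
  have "sdsD L m r * r = L/3*r^3 - r + 2*m" using r unfolding sdsD_def
    by (simp add: field_simps power3_eq_cube power2_eq_square)
  moreover have "(0 < sdsD L m r) = (0 < sdsD L m r * r)" using r by (simp add: zero_less_mult_iff)
  ultimately show ?thesis by simp
qed

lemma rC_facts:
  fixes L m :: real
  assumes L: "L > 0" and m: "0 < 3*m" and m2: "3*m < 1 / sqrt L"
  shows "rC L m > 3*m \<and> (\<forall>r > rC L m. sdsD L m r > 0)"
proof -
  define h where "h = (\<lambda>r::real. L/3*r^3 - r + 2*m)"
  have hc: "isCont h r" for r unfolding h_def by (intro continuous_intros)
  have big: "h R > 0" if "R \<ge> 1" "R \<ge> 3/L" for R
  proof -
    have "L*R/3 \<ge> 1" using that L by (simp add: field_simps)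
    have e: "L/3*R^3 = R^2 * (L*R/3)" by (simp add: power3_eq_cube power2_eq_square)
    have i: "R^2 * 1 \<le> R^2 * (L*R/3)" using \<open>L*R/3 \<ge> 1\<close> by (intro mult_left_mono) auto
    have "L/3*R^3 \<ge> R^2" unfolding e using i by simp
    moreover have "R^2 \<ge> R" using that by (simp add: power2_eq_square)
    ultimately show ?thesis unfolding h_def using m by linarith
  qed
  have sL: "sqrt L > 0" using L by simp
  have "9*m^2*L < 1"
  proof -
    have "3 * m * sqrt L < 1" using m2 sL by (simp add: field_simps)
    moreover have "3 * m * sqrt L > 0" using m sL by simp
    ultimately have "(3 * m * sqrt L)^2 < 1"
      using mult_strict_mono[of "3 * m * sqrt L" 1 "3 * m * sqrt L" 1] by (simp add: power2_eq_square)
    thus ?thesis using L by (simp add: power_mult_distrib)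
  qed
  have h3m: "h (3*m) < 0"
  proof -
    have "h (3*m) = m * (9*m^2*L - 1)" unfolding h_def by (simp add: power3_eq_cube power2_eq_square algebra_simps)
    thus ?thesis using m \<open>9*m^2*L < 1\<close> by (simp add: mult_pos_neg)
  qed
  define S where "S = {r. r > 0 \<and> sdsD L m r = 0}"
  have "S \<subseteq> {r. poly [:2*m, -1, 0, L/3:] r = 0}"
    unfolding S_def using h_root by (auto simp: power3_eq_cube algebra_simps)
  moreover have "[:2*m, -1, 0, L/3:] \<noteq> 0" by simp
  ultimately have fin: "finite S" using poly_roots_finite finite_subset by blast
  define R where "R = max 1 (3/L) + 3*m"
  have hR: "h R > 0" by (rule big) (use m in \<open>auto simp: R_def\<close>)
  have "\<exists>r. 3*m \<le> r \<and> r \<le> R \<and> h r = 0"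
    by (rule IVT) (use h3m hR hc m in \<open>auto simp: R_def\<close>)
  then obtain r1 where r1: "3*m \<le> r1" "h r1 = 0" by blast
  have "r1 \<noteq> 3*m" using r1 h3m by auto
  hence r1S: "r1 \<in> S" "r1 > 3*m" using r1 m h_root[of r1 L m] unfolding S_def h_def by auto
  define c where "c = Max S"
  have cS: "c \<in> S" and cmax: "\<And>y. y \<in> S \<Longrightarrow> y \<le> c"
    using fin r1S unfolding c_def by (auto intro: Max_in)
  have "rC L m = c" unfolding rC_def
    by (rule Greatest_equality) (use cS cmax in \<open>auto simp: S_def\<close>)
  moreover have "c > 3*m" using cmax[OF r1S(1)] r1S by simp
  moreover have "sdsD L m r > 0" if "r > c" for r
  proof (rule ccontr)
    assume "\<not> sdsD L m r > 0"
    have rp: "r > 0" using that \<open>c > 3*m\<close> m by simp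
    hence "h r \<le> 0" using h_pos[OF rp] \<open>\<not> sdsD L m r > 0\<close> unfolding h_def by auto
    define R2 where "R2 = max 1 (3/L) + r"
    have hR2: "h R2 > 0" by (rule big) (use rp in \<open>auto simp: R2_def\<close>)
    have "\<exists>z. r \<le> z \<and> z \<le> R2 \<and> h z = 0"
      by (rule IVT) (use \<open>h r \<le> 0\<close> hR2 hc rp in \<open>auto simp: R2_def\<close>)
    then obtain z where "r \<le> z" "h z = 0" by blast
    hence "z \<in> S" using rp h_root[of z L m] unfolding S_def h_def by auto
    thus False using cmax \<open>r \<le> z\<close> that by fastforce
  qed
  ultimately show ?thesis by simp
qed


definition sdsDp :: "real \<Rightarrow> real \<Rightarrow> real \<Rightarrow> real" where
  "sdsDp L m r = 2*L*r/3 - 2*m/r^2"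

lemma D_deriv: "r \<noteq> 0 \<Longrightarrow> (sdsD L m has_real_derivative sdsDp L m r) (at r)"
  unfolding sdsD_def[abs_def] sdsDp_def
  by (auto intro!: derivative_eq_intros simp: field_simps power2_eq_square)

lemma sum4: "(\<Sum>i<(4::nat). f i) = f 0 + f 1 + f 2 + f 3"
  by (simp add: eval_nat_numeral)

lemma pd_const: "(\<And>s. f (x(\<mu>:=s)) = f x) \<Longrightarrow> pd f x \<mu> = 0"
  unfolding pd_def by simp

lemma pd_g:
  assumes r: "x 0 \<noteq> 0" and D: "sdsD L m (x 0) \<noteq> 0"
  shows "pd (\<lambda>y. sds_g L m y \<sigma> \<nu>) x \<mu> =
    (if \<sigma> \<noteq> \<nu> then 0
     else if \<mu> = 0 then (if \<sigma> = 0 then sdsDp L m (x 0) / (sdsD L m (x 0))^2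
        else if \<sigma> = 1 then sdsDp L m (x 0)
        else if \<sigma> = 2 then 2 * x 0
        else if \<sigma> = 3 then 2 * x 0 * (sin (x 2))^2 else 0)
     else if \<mu> = 2 \<and> \<sigma> = 3 then (x 0)^2 * (2 * sin (x 2) * cos (x 2))
     else 0)"
proof -
  consider "\<sigma> \<noteq> \<nu>" | "\<sigma> = \<nu>" "\<mu> = 0" | "\<sigma> = \<nu>" "\<mu> = 2" | "\<sigma> = \<nu>" "\<mu> \<noteq> 0" "\<mu> \<noteq> 2" by blast
  then show ?thesis
  proof cases
    case 1 then show ?thesis by (subst pd_const) (auto simp: sds_g_def)
  next
    case 2
    have e: "pd (\<lambda>y. sds_g L m y \<sigma> \<nu>) x \<mu> = deriv (\<lambda>s. sds_g L m (x(0:=s)) \<sigma> \<sigma>) (x 0)"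
      using 2 by (simp add: pd_def)
    have d0: "((\<lambda>s. - (1 / sdsD L m s)) has_real_derivative sdsDp L m (x 0) / (sdsD L m (x 0))^2) (at (x 0))"
      using D_deriv[OF r, of L m] D
      by (auto intro!: derivative_eq_intros simp: field_simps power2_eq_square)
    have d1: "((\<lambda>s. s^2) has_real_derivative 2 * x 0) (at (x 0))"
      by (auto intro!: derivative_eq_intros)
    have d3: "((\<lambda>s. s^2 * (sin (x 2))^2) has_real_derivative 2 * x 0 * (sin (x 2))^2) (at (x 0))"
      by (auto intro!: derivative_eq_intros)
    show ?thesis unfolding e using 2 D_deriv[OF r, of L m]
      by (auto simp: sds_g_def DERIV_imp_deriv[OF d0] DERIV_imp_deriv[OF d1] DERIV_imp_deriv[OF d3] DERIV_imp_deriv)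
  next
    case 3
    show ?thesis
    proof (cases "\<sigma> = 3")
      case False then show ?thesis using 3 by (subst pd_const) (auto simp: sds_g_def)
    next
      case True
    have e: "pd (\<lambda>y. sds_g L m y \<sigma> \<nu>) x \<mu> = deriv (\<lambda>s. sds_g L m (x(2:=s)) \<sigma> \<sigma>) (x 2)"
      using 3 by (simp add: pd_def)
    have d3: "((\<lambda>s. (x 0)^2 * (sin s)^2) has_real_derivative (x 0)^2 * (2 * sin (x 2) * cos (x 2))) (at (x 2))"
      by (auto intro!: derivative_eq_intros)
    show ?thesis unfolding e using 3 True
      by (auto simp: sds_g_def DERIV_imp_deriv[OF d3])
    qed
  next
    case 4 then show ?thesis by (subst pd_const) (auto simp: sds_g_def)
  qed
qed

lemma sdsM_eq: "sdsD L m r > 0 \<Longrightarrow> r^2 / (sdsphi L m r)^2 = r^2 * sdsD L m r"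
  unfolding sdsphi_def by (simp add: power_divide)

lemma pd_M:
  assumes U: "open U" "x 0 \<in> U" "\<And>s. s \<in> U \<Longrightarrow> s \<noteq> 0 \<and> sdsD L m s > 0"
  shows "pd (\<lambda>y. sdsM L m y \<nu>) x \<mu> =
    (if \<nu> = 0 \<and> \<mu> = 0 then 2 * x 0 * sdsD L m (x 0) + (x 0)^2 * sdsDp L m (x 0) else 0)"
proof (cases "\<nu> = 0 \<and> \<mu> = 0")
  case True
  have r: "x 0 \<noteq> 0" using U by auto
  have d: "((\<lambda>s. s^2 * sdsD L m s) has_real_derivative 2 * x 0 * sdsD L m (x 0) + (x 0)^2 * sdsDp L m (x 0)) (at (x 0))"
    using D_deriv[OF r, of L m] by (auto intro!: derivative_eq_intros)
  have d2: "((\<lambda>s. s^2 / (sdsphi L m s)^2) has_real_derivative 2 * x 0 * sdsD L m (x 0) + (x 0)^2 * sdsDp L m (x 0)) (at (x 0))"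
    by (rule has_field_derivative_transform_within_open[OF d U(1) U(2)]) (use U(3) sdsM_eq in auto)
  show ?thesis using True unfolding pd_def sdsM_def by (simp add: DERIV_imp_deriv[OF d2])
next
  case False then show ?thesis by (subst pd_const) (auto simp: sdsM_def)
qed



lemma K_eq:
  assumes r: "x 0 > 0" and Dp: "sdsD L m (x 0) > 0" and sn: "sin (x 2) \<noteq> 0"
    and U: "open U" "x 0 \<in> U" "\<And>s. s \<in> U \<Longrightarrow> s \<noteq> 0 \<and> sdsD L m s > 0"
  shows "Kcurrent (sds_g L m) (sds_ginv L m) (sdsM L m) \<psi> x =
    - 2 * x 0 * (pd \<psi> x 1)^2 - (sdsD L m (x 0) / x 0 + sdsDp L m (x 0) / 2) *
       ((pd \<psi> x 2)^2 + (pd \<psi> x 3)^2 / (sin (x 2))^2)"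
proof -
  have r0: "x 0 \<noteq> 0" and D0: "sdsD L m (x 0) \<noteq> 0" using r Dp by auto
  show ?thesis
  unfolding Kcurrent_def deformation_def covd_def christoffel_def stress_def sum4
  apply (simp only: pd_g[of x L m, OF r0 D0] pd_M[of U x L m, OF U])
  apply (simp add: sds_g_def sds_ginv_def sdsM_def sdsM_eq[OF Dp])
  using r0 D0 sn apply (simp add: field_simps)
  apply algebra
  done
qed



theorem proposition3p4:
  fixes \<Lambda> m :: real and \<psi> :: "(nat \<Rightarrow> real) \<Rightarrow> real" and x :: "nat \<Rightarrow> real"
  assumes "\<Lambda> > 0" and "0 < 3 * m" and "3 * m < 1 / sqrt \<Lambda>"
    and "\<forall>y \<mu>. (\<lambda>s. \<psi> (y(\<mu> := s))) differentiable (at (y \<mu>))"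
    and "x 0 > rC \<Lambda> m" and "0 < x 2" and "x 2 < pi"
  shows "Kcurrent (sds_g \<Lambda> m) (sds_ginv \<Lambda> m) (sdsM \<Lambda> m) \<psi> x \<le> 0"
proof -
  have F: "rC \<Lambda> m > 3*m" "\<And>r. r > rC \<Lambda> m \<Longrightarrow> sdsD \<Lambda> m r > 0"
    using rC_facts[OF assms(1-3)] by auto
  define r where "r = x 0"
  have r: "r > 3*m" "r > 0" using F assms(2,5) unfolding r_def by auto
  have Dpos: "sdsD \<Lambda> m r > 0" using F(2) assms(5) unfolding r_def by auto
  have sn: "sin (x 2) > 0" using sin_gt_zero assms(6,7) by auto
  have U: "open {rC \<Lambda> m<..}" "x 0 \<in> {rC \<Lambda> m<..}"
    "\<And>s. s \<in> {rC \<Lambda> m<..} \<Longrightarrow> s \<noteq> 0 \<and> sdsD \<Lambda> m s > 0"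
    using assms(2,5) F by auto
  have K: "Kcurrent (sds_g \<Lambda> m) (sds_ginv \<Lambda> m) (sdsM \<Lambda> m) \<psi> x =
    - 2 * x 0 * (pd \<psi> x 1)^2 - (sdsD \<Lambda> m (x 0) / x 0 + sdsDp \<Lambda> m (x 0) / 2) *
       ((pd \<psi> x 2)^2 + (pd \<psi> x 3)^2 / (sin (x 2))^2)"
    by (rule K_eq[of x \<Lambda> m "{rC \<Lambda> m<..}", OF _ _ _ U]) (use r Dpos sn in \<open>auto simp: r_def\<close>)
  have e1: "r * (sdsD \<Lambda> m r / r + sdsDp \<Lambda> m r / 2)
      = 2 * sdsD \<Lambda> m r + (1 - 3 * (m / r))"
    using r unfolding sdsD_def sdsDp_def by (simp add: field_simps power2_eq_square)
  have "m / r < 1/3" using r by (simp add: field_simps)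
  hence "r * (sdsD \<Lambda> m r / r + sdsDp \<Lambda> m r / 2) > 0" using e1 Dpos by linarith
  hence c: "sdsD \<Lambda> m r / r + sdsDp \<Lambda> m r / 2 \<ge> 0" using r
    by (simp add: zero_less_mult_iff)
  have "(pd \<psi> x 2)^2 + (pd \<psi> x 3)^2 / (sin (x 2))^2 \<ge> 0" by simp
  hence "(sdsD \<Lambda> m r / r + sdsDp \<Lambda> m r / 2) * ((pd \<psi> x 2)^2 + (pd \<psi> x 3)^2 / (sin (x 2))^2) \<ge> 0"
    using c by simp
  moreover have "2 * x 0 * (pd \<psi> x 1)^2 \<ge> 0" using r unfolding r_def by simp
  ultimately show ?thesis unfolding K r_def[symmetric] by linarith
qed
end
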